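(* Fix $l,r>0$, $0<\alpha<\beta<1$ and diffusion constants $D_1,D_2>0$, let $\delta=\frac{D_2-D_1}{D_2+D_1}$, and for each $Q_0\in\mathbb{R}$ let $A(Q_0,\delta)\in(0,A_M)$ be the unique solution $A$ of $G_2(Q_0,A,\delta)=0$. (a) If $D_1<D_2$ (i.e. $\delta>0$), then there exists $Q_0^-<0$ such that $\partial_{Q_0}A(Q_0,\delta)$ has the same sign as $l-r$ when $Q_0>Q_0^-$, and the opposite sign when $Q_0<Q_0^-$. (b) If $D_1>D_2$ (i.e. $\delta<0$), then there exists $Q_0^+>0$ such that $\partial_{Q_0}A(Q_0,\delta)$ has the sign opposite to that of $l-r$ when $Q_0<Q_0^+$, and the same sign as $l-r$ when $Q_0>Q_0^+$.
   Context: Setting: reduction of the steady zero-current Poisson–Nernst–Planck problem for two ion species with valences $\pm1$; $l,r>0$ are boundary concentrations, the permanent charge is $2Q_0$ on $(a,b)$ and $0$ elsewhere in $(0,1)$, $\alpha=H(a)/H(1)$, $\beta=H(b)/H(1)$ with $H(x)=\int_0^x ds/h(s)$ and $h>0$ the cross-sectional area, so $0<\alpha<\beta<1$. For $Q_0\in\mathbb{R}$, $A>0$ define $B=\frac{1-\beta}{\alpha}(l-A)+r$, $A_M=l+\frac{\alpha}{1-\beta}r$, $S_a=\sqrt{Q_0^2+A^2}$, $S_b=\sqrt{Q_0^2+B^2}$, $N=A-l+S_a-S_b$, and $G_2(Q_0,A,\delta)=\delta Q_0\ln\frac{S_a+\delta Q_0}{S_b+\delta Q_0}-N$. It is known that for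 each $Q_0$ there is a unique $A=A(Q_0,\delta)\in(0,A_M)$ with $G_2(Q_0,A,\delta)=0$, depending differentiably on $Q_0$; $A$ is the geometric mean $\sqrt{c_1(a)c_2(a)}$ of the two concentrations at $x=a$. *)

theory Defs
  imports "HOL-Analysis.Analysis"
begin

text \<open>Zero-current PNP reduction. Parameters: boundary concentrations l r,
  alpha = H(a)/H(1), beta = H(b)/H(1).\<close>

definition Bpnp :: "real \<Rightarrow> real \<Rightarrow> real \<Rightarrow> real \<Rightarrow> real \<Rightarrow> real" where
  "Bpnp l r \<alpha> \<beta> A = (1 - \<beta>) / \<alpha> * (l - A) + r"

definition AMpnp :: "real \<Rightarrow> real \<Rightarrow> real \<Rightarrow> real \<Rightarrow> real" where
  "AMpnp l r \<alpha> \<beta> = l + \<alpha> / (1 - \<beta>) * r"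

definition Sa :: "real \<Rightarrow> real \<Rightarrow> real" where
  "Sa Q0 A = sqrt (Q0\<^sup>2 + A\<^sup>2)"

definition Sb :: "real \<Rightarrow> real \<Rightarrow> real \<Rightarrow> real \<Rightarrow> real \<Rightarrow> real \<Rightarrow> real" where
  "Sb l r \<alpha> \<beta> Q0 A = sqrt (Q0\<^sup>2 + (Bpnp l r \<alpha> \<beta> A)\<^sup>2)"

definition Npnp :: "real \<Rightarrow> real \<Rightarrow> real \<Rightarrow> real \<Rightarrow> real \<Rightarrow> real \<Rightarrow> real" where
  "Npnp l r \<alpha> \<beta> Q0 A = A - l + Sa Q0 A - Sb l r \<alpha> \<beta> Q0 A"

definition G2 :: "real \<Rightarrow> real \<Rightarrow> real \<Rightarrow> real \<Rightarrow> real \<Rightarrow> real \<Rightarrow> real \<Rightarrow> real" where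
  "G2 l r \<alpha> \<beta> Q0 A \<delta> =
     \<delta> * Q0 * ln ((Sa Q0 A + \<delta> * Q0) / (Sb l r \<alpha> \<beta> Q0 A + \<delta> * Q0))
     - Npnp l r \<alpha> \<beta> Q0 A"

definition Asol :: "real \<Rightarrow> real \<Rightarrow> real \<Rightarrow> real \<Rightarrow> real \<Rightarrow> real \<Rightarrow> real" where
  "Asol l r \<alpha> \<beta> Q0 \<delta> =
     (THE A. 0 < A \<and> A < AMpnp l r \<alpha> \<beta> \<and> G2 l r \<alpha> \<beta> Q0 A \<delta> = 0)"

end

theory Submission
  imports Defs
begin


lemma single_cross:
  fixes V :: "real \<Rightarrow> real" and Q1 :: real
  assumes cont: "continuous_on UNIV V"
    and der: "\<And>x. x < 0 \<Longrightarrow> V x = 0 \<Longrightarrow> \<exists>D<0. (V has_real_derivative D) (at x)"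
    and neg0: "\<And>x. x \<ge> 0 \<Longrightarrow> V x < 0"
    and Q1: "Q1 < 0" "V Q1 > 0"
  shows "\<exists>z<0. \<forall>x. (x > z \<longrightarrow> V x < 0) \<and> (x < z \<longrightarrow> V x > 0)"
proof -
  have contI: "continuous_on {a..b} V" for a b using cont continuous_on_subset by blast
  obtain z where z: "Q1 \<le> z" "z \<le> 0" "V z = 0"
    using IVT2'[of V 0 0 Q1] Q1 neg0[of 0] contI by force
  have z0: "z < 0" using z neg0[of z] by (cases "z < 0") auto
  obtain D where D: "D < 0" "(V has_real_derivative D) (at z)" using der[OF z0 z(3)] by blast
  have right: "V q < 0" if "q > z" for q
  proof (rule ccontr)
    assume "\<not> V q < 0"
    hence Vq: "V q \<ge> 0" by simp
    have q0: "q < 0" using neg0[of q] Vq by (cases "q < 0") auto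
    obtain d where d: "d > 0" "\<And>h. h > 0 \<Longrightarrow> h < d \<Longrightarrow> V z > V (z + h)"
      using DERIV_neg_dec_right[OF D(2) D(1)] by blast
    define p where "p = z + min d (q - z) / 2"
    have pq: "z < p" "p < q" using d(1) that unfolding p_def by (auto simp: min_def field_simps)
    have Vp: "V p < 0" using d(2)[of "min d (q - z) / 2"] d(1) that z(3) unfolding p_def
      by (auto simp: min_def field_simps)
    define Zs where "Zs = {x \<in> {p..q}. V x = 0}"
    have cl: "closed Zs" unfolding Zs_def
      by (rule continuous_closed_preimage_constant[OF contI]) simp
    obtain y0 where y0: "p \<le> y0" "y0 \<le> q" "V y0 = 0"
      using IVT'[of V p 0 q] Vp Vq pq contI by force
    have ne: "Zs \<noteq> {}" using y0 unfolding Zs_def by auto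
    have bdd: "bdd_below Zs" unfolding Zs_def by (rule bdd_belowI[of _ p]) auto
    define q1 where "q1 = Inf Zs"
    have q1Z: "q1 \<in> Zs" unfolding q1_def using closed_contains_Inf[OF ne bdd cl] .
    hence q1: "p \<le> q1" "q1 \<le> q" "V q1 = 0" unfolding Zs_def by auto
    have pq1: "p < q1" using q1 Vp by (cases "p = q1") auto
    have below: "V x < 0" if px: "p \<le> x" "x < q1" for x
    proof (rule ccontr)
      assume "\<not> V x < 0"
      then obtain y where y: "p \<le> y" "y \<le> x" "V y = 0"
        using IVT'[of V p 0 x] Vp px contI by force
      hence "y \<in> Zs" using px q1 unfolding Zs_def by auto
      hence "q1 \<le> y" unfolding q1_def using bdd by (rule cInf_lower)
      thus False using y px by simp
    qed
    obtain D1 where D1: "D1 < 0" "(V has_real_derivative D1) (at q1)"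
      using der[of q1] q1 q0 by force
    obtain d1 where d1: "d1 > 0" "\<And>h. h > 0 \<Longrightarrow> h < d1 \<Longrightarrow> V q1 < V (q1 - h)"
      using DERIV_neg_dec_left[OF D1(2) D1(1)] by blast
    define h where "h = min d1 (q1 - p) / 2"
    have "V q1 < V (q1 - h)" using d1 pq1 unfolding h_def by (intro d1(2)) (auto simp: min_def field_simps)
    moreover have "V (q1 - h) < 0" using below[of "q1 - h"] d1(1) pq1 unfolding h_def
      by (auto simp: min_def field_simps)
    ultimately show False using q1 by simp
  qed
  have left: "V q > 0" if "q < z" for q
  proof (rule ccontr)
    assume "\<not> V q > 0"
    hence Vq: "V q \<le> 0" by simp
    obtain d where d: "d > 0" "\<And>h. h > 0 \<Longrightarrow> h < d \<Longrightarrow> V z < V (z - h)"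
      using DERIV_neg_dec_left[OF D(2) D(1)] by blast
    define p where "p = z - min d (z - q) / 2"
    have pq: "p < z" "q < p" using d(1) that unfolding p_def by (auto simp: min_def field_simps)
    have Vp: "V p > 0" using d(2)[of "min d (z - q) / 2"] d(1) that z(3) unfolding p_def
      by (auto simp: min_def field_simps)
    define Zs where "Zs = {x \<in> {q..p}. V x = 0}"
    have cl: "closed Zs" unfolding Zs_def
      by (rule continuous_closed_preimage_constant[OF contI]) simp
    obtain y0 where y0: "q \<le> y0" "y0 \<le> p" "V y0 = 0"
      using IVT'[of V q 0 p] Vp Vq pq contI by force
    have ne: "Zs \<noteq> {}" using y0 unfolding Zs_def by auto
    have bdd: "bdd_above Zs" unfolding Zs_def by (rule bdd_aboveI[of _ p]) auto
    define q1 where "q1 = Sup Zs"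
    have q1Z: "q1 \<in> Zs" unfolding q1_def using closed_contains_Sup[OF ne bdd cl] .
    hence q1: "q \<le> q1" "q1 \<le> p" "V q1 = 0" unfolding Zs_def by auto
    have pq1: "q1 < p" using q1 Vp by (cases "p = q1") auto
    have above: "V x > 0" if px: "q1 < x" "x \<le> p" for x
    proof (rule ccontr)
      assume "\<not> V x > 0"
      then obtain y where y: "x \<le> y" "y \<le> p" "V y = 0"
        using IVT'[of V x 0 p] Vp px contI by force
      hence "y \<in> Zs" using px q1 unfolding Zs_def by auto
      hence "y \<le> q1" unfolding q1_def using bdd by (rule cSup_upper)
      thus False using y px by simp
    qed
    obtain D1 where D1: "D1 < 0" "(V has_real_derivative D1) (at q1)"
      using der[of q1] q1 pq z0 by force
    obtain d1 where d1: "d1 > 0" "\<And>h. h > 0 \<Longrightarrow> h < d1 \<Longrightarrow> V q1 > V (q1 + h)"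
      using DERIV_neg_dec_right[OF D1(2) D1(1)] by blast
    define h where "h = min d1 (p - q1) / 2"
    have "V q1 > V (q1 + h)" using d1 pq1 unfolding h_def by (intro d1(2)) (auto simp: min_def field_simps)
    moreover have "V (q1 + h) > 0" using above[of "q1 + h"] d1(1) pq1 unfolding h_def
      by (auto simp: min_def field_simps)
    ultimately show False using q1 by simp
  qed
  show ?thesis using z0 left right by blast
qed

locale pnp =
  fixes l r \<alpha> \<beta> \<delta> :: real
  assumes l: "l > 0" and r: "r > 0" and al: "0 < \<alpha>" and ab: "\<alpha> < \<beta>" and b1: "\<beta> < 1"
    and dl: "\<bar>\<delta>\<bar> < 1"
begin

definition SS :: "real \<Rightarrow> real \<Rightarrow> real" where "SS Q x = sqrt (Q\<^sup>2 + x\<^sup>2)"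
definition uu :: "real \<Rightarrow> real \<Rightarrow> real" where "uu Q x = SS Q x + \<delta> * Q"
definition phi :: "real \<Rightarrow> real \<Rightarrow> real" where "phi Q x = SS Q x - \<delta> * Q * ln (uu Q x)"
definition psi :: "real \<Rightarrow> real \<Rightarrow> real" where
  "psi Q x = (1 - \<delta>\<^sup>2) * Q / uu Q x - \<delta> * ln (uu Q x)"
definition psiQ :: "real \<Rightarrow> real \<Rightarrow> real" where
  "psiQ Q x = (1 - \<delta>\<^sup>2) / uu Q x - (Q + \<delta> * SS Q x)\<^sup>2 / (SS Q x * (uu Q x)\<^sup>2)"
definition psiX :: "real \<Rightarrow> real \<Rightarrow> real" where
  "psiX Q x = - ((Q + \<delta> * SS Q x) * x / (SS Q x * (uu Q x)\<^sup>2))"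

lemma SS_pos: "Q \<noteq> 0 \<or> x \<noteq> 0 \<Longrightarrow> SS Q x > 0"
  unfolding SS_def by (simp add: sum_power2_gt_zero_iff)

lemma SS_ge: "\<bar>Q\<bar> \<le> SS Q x"
  unfolding SS_def by (metis abs_ge_zero le_add_same_cancel1 real_sqrt_abs real_sqrt_le_iff zero_le_power2)

lemma SS_sq: "(SS Q x)\<^sup>2 = Q\<^sup>2 + x\<^sup>2"
  unfolding SS_def by simp

lemma uu_pos: assumes "Q \<noteq> 0 \<or> x \<noteq> 0" shows "uu Q x > 0"
proof (cases "Q = 0")
  case True thus ?thesis using SS_pos[OF assms] unfolding uu_def by simp
next
  case False
  have "\<bar>\<delta> * Q\<bar> < \<bar>Q\<bar>" using dl False by (simp add: abs_mult)
  thus ?thesis using SS_ge[of Q x] unfolding uu_def by linarith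
qed

lemma SS_fderiv:
  assumes "Q \<noteq> 0 \<or> x \<noteq> 0"
  shows "((\<lambda>p. SS (fst p) (snd p)) has_derivative (\<lambda>h. (Q * fst h + x * snd h) / SS Q x)) (at (Q, x))"
proof -
  have S: "SS Q x > 0" using SS_pos assms by auto
  have d1: "((\<lambda>p. (fst p)\<^sup>2 + (snd p)\<^sup>2) has_derivative (\<lambda>h. 2 * Q * fst h + 2 * x * snd h)) (at (Q,x))"
    by (rule has_derivative_eq_rhs, (rule derivative_intros)+) (auto simp: algebra_simps)
  have "Q\<^sup>2 + x\<^sup>2 > 0" using S SS_sq[of Q x] by (metis zero_less_power)
  from DERIV_real_sqrt[OF this] have d2: "(sqrt has_real_derivative inverse (sqrt (Q\<^sup>2 + x\<^sup>2)) / 2) (at (Q\<^sup>2 + x\<^sup>2))" .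
  have d2': "(sqrt has_real_derivative inverse (sqrt (Q\<^sup>2 + x\<^sup>2)) / 2) (at ((\<lambda>p. (fst p)\<^sup>2 + (snd p)\<^sup>2) (Q,x)))"
    using d2 by simp
  have D: "((\<lambda>p. sqrt ((fst p)\<^sup>2 + (snd p)\<^sup>2)) has_derivative (\<lambda>h. (2 * Q * fst h + 2 * x * snd h) * (inverse (sqrt (Q\<^sup>2 + x\<^sup>2)) / 2))) (at (Q,x))"
    by (rule DERIV_compose_FDERIV[where f=sqrt and g="\<lambda>p. (fst p)\<^sup>2 + (snd p)\<^sup>2", OF d2' d1])
  have E: "(\<lambda>h. (2 * Q * fst h + 2 * x * snd h) * (inverse (sqrt (Q\<^sup>2 + x\<^sup>2)) / 2)) = (\<lambda>h. (Q * fst h + x * snd h) / SS Q x)"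
  proof (rule ext)
    fix h :: "real \<times> real"
    have "\<And>a b c :: real. (2 * Q * a + 2 * x * b) * (c / 2) = (Q * a + x * b) * c" by algebra
    thus "(2 * Q * fst h + 2 * x * snd h) * (inverse (sqrt (Q\<^sup>2 + x\<^sup>2)) / 2) = (Q * fst h + x * snd h) / SS Q x"
      unfolding SS_def divide_inverse[of _ "sqrt _"] by metis
  qed
  have F: "(\<lambda>p. SS (fst p) (snd p)) = (\<lambda>p. sqrt ((fst p)\<^sup>2 + (snd p)\<^sup>2))" by (simp add: SS_def)
  show ?thesis unfolding F using D unfolding E .
qed

lemma fst_d: "((\<lambda>p. (c::real) * fst p) has_derivative (\<lambda>h. c * fst h)) (F :: (real \<times> real) filter)"
  by (rule has_derivative_mult_right[OF has_derivative_fst[OF has_derivative_ident]])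

lemma alg_phi:
  fixes S u Q x a b :: real
  assumes "S > 0" "u > 0" "u = S + \<delta> * Q"
  shows "(Q * a + x * b) / S - (\<delta> * Q * (((Q * a + x * b) / S + \<delta> * a) / u) + \<delta> * a * ln u)
     = ((1 - \<delta>\<^sup>2) * Q / u - \<delta> * ln u) * a + x / u * b"
proof -
  define T where "T = (Q * a + x * b) / S"
  have TS: "T * S = Q * a + x * b" unfolding T_def using assms(1) by simp
  have "T * u - \<delta> * Q * (T + \<delta> * a) = T * S - \<delta>\<^sup>2 * Q * a"
    unfolding assms(3) by (simp add: algebra_simps power2_eq_square)
  also have "\<dots> = (1 - \<delta>\<^sup>2) * Q * a + x * b" using TS by (simp add: algebra_simps)
  finally have e: "T * u - \<delta> * Q * (T + \<delta> * a) = (1 - \<delta>\<^sup>2) * Q * a + x * b" .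
  have "T - \<delta> * Q * ((T + \<delta> * a) / u) = (T * u - \<delta> * Q * (T + \<delta> * a)) / u"
    using assms(2) by (simp add: field_simps)
  also have "\<dots> = ((1 - \<delta>\<^sup>2) * Q / u) * a + x / u * b" unfolding e using assms(2) by (simp add: field_simps)
  finally have "T - \<delta> * Q * ((T + \<delta> * a) / u) = ((1 - \<delta>\<^sup>2) * Q / u) * a + x / u * b" .
  thus ?thesis unfolding T_def[symmetric] by (simp add: algebra_simps)
qed

lemma uu_fderiv:
  assumes "x > 0"
  shows "((\<lambda>p. uu (fst p) (snd p)) has_derivative (\<lambda>h. (Q * fst h + x * snd h) / SS Q x + \<delta> * fst h)) (at (Q, x))"
  unfolding uu_def using has_derivative_add[OF SS_fderiv fst_d] assms by simp

lemma lnu_fderiv: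
  assumes "x > 0"
  shows "((\<lambda>p. ln (uu (fst p) (snd p))) has_derivative
     (\<lambda>h. ((Q * fst h + x * snd h) / SS Q x + \<delta> * fst h) / uu Q x)) (at (Q, x))"
proof -
  have u: "uu Q x > 0" using uu_pos assms by auto
  have d2': "(ln has_real_derivative inverse (uu Q x)) (at ((\<lambda>p. uu (fst p) (snd p)) (Q,x)))"
    using DERIV_ln[OF u] by simp
  have "((\<lambda>p. ln (uu (fst p) (snd p))) has_derivative (\<lambda>h. ((Q * fst h + x * snd h) / SS Q x + \<delta> * fst h) * inverse (uu Q x))) (at (Q,x))"
    by (rule DERIV_compose_FDERIV[where f=ln and g="\<lambda>p. uu (fst p) (snd p)", OF d2' uu_fderiv[OF assms]])
  thus ?thesis by (simp add: divide_inverse)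
qed

lemma phi_fderiv:
  assumes "x > 0"
  shows "((\<lambda>p. phi (fst p) (snd p)) has_derivative (\<lambda>h. psi Q x * fst h + x / uu Q x * snd h)) (at (Q, x))"
proof -
  have S: "SS Q x > 0" using SS_pos assms by auto
  have u: "uu Q x > 0" using uu_pos assms by auto
  have e: "SS Q x * SS Q x = Q * Q + x * x" using SS_sq[of Q x] by (simp add: power2_eq_square)
  have D: "((\<lambda>p. SS (fst p) (snd p) - \<delta> * fst p * ln (uu (fst p) (snd p))) has_derivative
     (\<lambda>h. (Q * fst h + x * snd h) / SS Q x - (\<delta> * fst (Q,x) * (((Q * fst h + x * snd h) / SS Q x + \<delta> * fst h) / uu Q x) + \<delta> * fst h * ln (uu (fst (Q,x)) (snd (Q,x)))))) (at (Q,x))"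
  proof -
    have x0: "Q \<noteq> 0 \<or> x \<noteq> 0" using assms by simp
    show ?thesis by (rule has_derivative_diff[OF SS_fderiv[OF x0] has_derivative_mult[OF fst_d lnu_fderiv[OF assms]]])
  qed
  have E: "(\<lambda>h. (Q * fst h + x * snd h) / SS Q x - (\<delta> * fst (Q,x) * (((Q * fst h + x * snd h) / SS Q x + \<delta> * fst h) / uu Q x) + \<delta> * fst h * ln (uu (fst (Q,x)) (snd (Q,x)))))
     = (\<lambda>h. psi Q x * fst h + x / uu Q x * snd h)"
  proof (rule ext)
    fix h :: "real \<times> real"
    show "(Q * fst h + x * snd h) / SS Q x - (\<delta> * fst (Q,x) * (((Q * fst h + x * snd h) / SS Q x + \<delta> * fst h) / uu Q x) + \<delta> * fst h * ln (uu (fst (Q,x)) (snd (Q,x))))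
     = psi Q x * fst h + x / uu Q x * snd h"
      using alg_phi[OF S u uu_def, where a="fst h" and b="snd h"] unfolding psi_def by simp
  qed
  show ?thesis unfolding phi_def using D unfolding E .
qed

lemma alg_psi:
  fixes S u Q x a b :: real
  assumes S: "S > 0" and u: "u > 0" and ue: "u = S + \<delta> * Q"
  shows "- ((1 - \<delta>\<^sup>2) * Q) * (inverse u * ((Q * a + x * b) / S + \<delta> * a) * inverse u) + (1 - \<delta>\<^sup>2) * a / u
           - \<delta> * (((Q * a + x * b) / S + \<delta> * a) / u)
     = ((1 - \<delta>\<^sup>2) / u - (Q + \<delta> * S)\<^sup>2 / (S * u\<^sup>2)) * a + (- ((Q + \<delta> * S) * x / (S * u\<^sup>2))) * b"
proof -
  define T where "T = (Q * a + x * b) / S + \<delta> * a"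
  define K where "K = Q + \<delta> * S"
  have TS: "T = (K * a + x * b) / S" unfolding T_def K_def using S by (simp add: field_simps)
  have Ku: "(1 - \<delta>\<^sup>2) * Q + \<delta> * u = K" unfolding K_def ue by (simp add: algebra_simps power2_eq_square)
  have "- ((1 - \<delta>\<^sup>2) * Q) * (inverse u * T * inverse u) - \<delta> * (T / u) = - T * ((1 - \<delta>\<^sup>2) * Q + \<delta> * u) / u\<^sup>2"
    using u by (simp add: field_simps power2_eq_square)
  also have "\<dots> = - T * K / u\<^sup>2" unfolding Ku ..
  also have "\<dots> = - (K\<^sup>2 / (S * u\<^sup>2)) * a - (K * x / (S * u\<^sup>2)) * b"
    unfolding TS using S u by (simp add: field_simps power2_eq_square)
  finally have "- ((1 - \<delta>\<^sup>2) * Q) * (inverse u * T * inverse u) - \<delta> * (T / u) = - (K\<^sup>2 / (S * u\<^sup>2)) * a - (K * x / (S * u\<^sup>2)) * b" .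
  thus ?thesis unfolding T_def[symmetric] K_def[symmetric] by (simp add: algebra_simps diff_divide_distrib)
qed

lemma psi_fderiv:
  assumes "x > 0"
  shows "((\<lambda>p. psi (fst p) (snd p)) has_derivative (\<lambda>h. psiQ Q x * fst h + psiX Q x * snd h)) (at (Q, x))"
proof -
  have S: "SS Q x > 0" using SS_pos assms by auto
  have u: "uu Q x > 0" using uu_pos assms by auto
  have D: "((\<lambda>p. (1 - \<delta>\<^sup>2) * fst p / uu (fst p) (snd p) - \<delta> * ln (uu (fst p) (snd p))) has_derivative
     (\<lambda>h. - ((1 - \<delta>\<^sup>2) * fst (Q,x)) * (inverse (uu (fst (Q,x)) (snd (Q,x))) * ((Q * fst h + x * snd h) / SS Q x + \<delta> * fst h) * inverse (uu (fst (Q,x)) (snd (Q,x))))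
        + (1 - \<delta>\<^sup>2) * fst h / uu (fst (Q,x)) (snd (Q,x))
        - \<delta> * (((Q * fst h + x * snd h) / SS Q x + \<delta> * fst h) / uu Q x))) (at (Q,x))"
    by (rule has_derivative_diff[OF has_derivative_divide[OF fst_d uu_fderiv[OF assms]] has_derivative_mult_right[OF lnu_fderiv[OF assms]]])
      (use u in simp)
  have E: "(\<lambda>h. - ((1 - \<delta>\<^sup>2) * fst (Q,x)) * (inverse (uu (fst (Q,x)) (snd (Q,x))) * ((Q * fst h + x * snd h) / SS Q x + \<delta> * fst h) * inverse (uu (fst (Q,x)) (snd (Q,x))))
        + (1 - \<delta>\<^sup>2) * fst h / uu (fst (Q,x)) (snd (Q,x))
        - \<delta> * (((Q * fst h + x * snd h) / SS Q x + \<delta> * fst h) / uu Q x))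
     = (\<lambda>h. psiQ Q x * fst h + psiX Q x * snd h)"
  proof (rule ext)
    fix h :: "real \<times> real"
    show "- ((1 - \<delta>\<^sup>2) * fst (Q,x)) * (inverse (uu (fst (Q,x)) (snd (Q,x))) * ((Q * fst h + x * snd h) / SS Q x + \<delta> * fst h) * inverse (uu (fst (Q,x)) (snd (Q,x))))
        + (1 - \<delta>\<^sup>2) * fst h / uu (fst (Q,x)) (snd (Q,x))
        - \<delta> * (((Q * fst h + x * snd h) / SS Q x + \<delta> * fst h) / uu Q x) = psiQ Q x * fst h + psiX Q x * snd h"
      using alg_psi[OF S u uu_def, where a="fst h" and b="snd h"] unfolding psiQ_def psiX_def fst_conv snd_conv .
  qed
  have F: "(\<lambda>p. psi (fst p) (snd p)) = (\<lambda>p. (1 - \<delta>\<^sup>2) * fst p / uu (fst p) (snd p) - \<delta> * ln (uu (fst p) (snd p)))"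
    by (simp add: psi_def)
  show ?thesis unfolding F using D unfolding E .
qed

lemma chain2:
  assumes f: "((\<lambda>p. f (fst p) (snd p)) has_derivative (\<lambda>h. a * fst h + b * snd h)) (at (Q, g Q))"
    and g: "(g has_real_derivative g') (at Q)"
  shows "((\<lambda>q. f q (g q)) has_real_derivative (a + b * g')) (at Q)"
proof -
  have p: "((\<lambda>q. (q, g q)) has_derivative (\<lambda>h. (h, h * g'))) (at Q)"
    using has_derivative_Pair[OF has_derivative_ident g[unfolded has_field_derivative_def]]
    by (simp add: mult.commute)
  have D: "((\<lambda>q. (\<lambda>p. f (fst p) (snd p)) (q, g q)) has_derivative (\<lambda>h. a * fst (h, h * g') + b * snd (h, h * g'))) (at Q)"
    by (rule has_derivative_compose[OF p]) (use f in simp)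
  have E: "(\<lambda>h. a * fst (h, h * g') + b * snd (h, h * g')) = (*) (a + b * g')" by (rule ext) (simp add: algebra_simps)
  show ?thesis unfolding has_field_derivative_def using D unfolding E by simp
qed

lemma chain2x:
  assumes f: "((\<lambda>p. f (fst p) (snd p)) has_derivative (\<lambda>h. a * fst h + b * snd h)) (at (Q, x))"
  shows "(f Q has_real_derivative b) (at x)"
proof -
  have p: "((\<lambda>t. (Q, t)) has_derivative (\<lambda>h. (0, h))) (at x)"
    by (rule has_derivative_Pair[where f="\<lambda>_. Q" and f'="\<lambda>_. 0" and g="\<lambda>t. t" and g'="\<lambda>t. t", OF has_derivative_const has_derivative_ident])
  have D: "((\<lambda>t. (\<lambda>p. f (fst p) (snd p)) (Q, t)) has_derivative (\<lambda>h. a * fst (0::real, h) + b * snd (0::real, h))) (at x)"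
    by (rule has_derivative_compose[OF p]) (use f in simp)
  have E: "(\<lambda>h. a * fst (0::real, h) + b * snd (0::real, h)) = (*) b" by (rule ext) simp
  show ?thesis unfolding has_field_derivative_def using D unfolding E by simp
qed

lemma chain2q:
  assumes f: "((\<lambda>p. f (fst p) (snd p)) has_derivative (\<lambda>h. a * fst h + b * snd h)) (at (Q, x))"
  shows "((\<lambda>q. f q x) has_real_derivative a) (at Q)"
  using chain2[where g="\<lambda>_. x" and g'=0, OF f] by simp

lemma phi_deriv_x: "x > 0 \<Longrightarrow> (phi Q has_real_derivative x / uu Q x) (at x)"
  by (rule chain2x[OF phi_fderiv])

lemma psi_deriv_x: "x > 0 \<Longrightarrow> (psi Q has_real_derivative psiX Q x) (at x)"
  by (rule chain2x[OF psi_fderiv])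

lemma phi_cont: "continuous_on UNIV (phi Q)"
proof (cases "Q = 0")
  case True
  hence "phi Q = (\<lambda>x. sqrt (0 + x\<^sup>2))" by (auto simp: phi_def SS_def)
  thus ?thesis by (auto intro!: continuous_intros)
next
  case False
  have u: "\<forall>x\<in>UNIV. uu Q x \<noteq> 0" using uu_pos[of Q] False by (metis less_irrefl)
  have c1: "continuous_on UNIV (\<lambda>x. uu Q x)" unfolding uu_def SS_def by (intro continuous_intros)
  have "continuous_on UNIV (\<lambda>x. ln (uu Q x))" by (rule continuous_on_ln[OF c1 u])
  note c3 = this
  have c2: "continuous_on UNIV (\<lambda>x. SS Q x)" unfolding SS_def by (intro continuous_intros)
  have "continuous_on UNIV (\<lambda>x. SS Q x - \<delta> * Q * ln (uu Q x))"
    by (rule continuous_on_diff[OF c2 continuous_on_mult[OF continuous_on_const c3]])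
  thus ?thesis unfolding phi_def[abs_def] by simp
qed

lemma phi_mono: assumes "0 \<le> x" "x \<le> y" shows "phi Q x \<le> phi Q y"
proof (rule DERIV_nonneg_imp_increasing_open[OF assms(2)])
  fix t assume "x < t" "t < y"
  hence t: "t > 0" using assms by simp
  show "\<exists>d. (phi Q has_real_derivative d) (at t) \<and> 0 \<le> d"
    using phi_deriv_x[OF t] uu_pos[of Q t] t by (intro exI[of _ "t / uu Q t"]) auto
next
  show "continuous_on {x..y} (phi Q)" using phi_cont continuous_on_subset by blast
qed

lemma phi_strict: assumes "0 \<le> x" "x < y" shows "phi Q x < phi Q y"
proof (rule DERIV_pos_imp_increasing_open[OF assms(2)])
  fix t assume "x < t" "t < y"
  hence t: "t > 0" using assms by simp
  show "\<exists>d. (phi Q has_real_derivative d) (at t) \<and> 0 < d"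
    using phi_deriv_x[OF t] uu_pos[of Q t] t by (intro exI[of _ "t / uu Q t"]) auto
next
  show "continuous_on {x..y} (phi Q)" using phi_cont continuous_on_subset by blast
qed

definition kk :: real where "kk = (1 - \<beta>) / \<alpha>"
definition BB :: "real \<Rightarrow> real" where "BB a = kk * (l - a) + r"
definition AM :: real where "AM = l + \<alpha> / (1 - \<beta>) * r"
definition FF :: "real \<Rightarrow> real \<Rightarrow> real" where "FF Q a = a - l + phi Q a - phi Q (BB a)"

lemma kk_pos: "kk > 0" unfolding kk_def using al b1 by simp
lemma BB_AM: "BB AM = 0" unfolding BB_def AM_def kk_def using al b1 by (simp add: field_simps)
lemma BB_pos: "a < AM \<Longrightarrow> BB a > 0"
proof -
  assume "a < AM"
  hence "kk * (AM - a) > 0" using kk_pos by simp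
  thus "BB a > 0" using BB_AM unfolding BB_def by (simp add: algebra_simps)
qed
lemma BB_mono: "a \<le> b \<Longrightarrow> BB b \<le> BB a" unfolding BB_def using kk_pos by (simp add: mult_left_mono)
lemma l_AM: "l < AM" unfolding AM_def using al b1 r by simp
lemma BB_l: "BB l = r" unfolding BB_def by simp
lemma AM_pos: "AM > 0" using l_AM l by simp

lemma FF_grow: assumes "0 \<le> a" "a \<le> b" "b \<le> AM" shows "b - a \<le> FF Q b - FF Q a"
proof -
  have "phi Q a \<le> phi Q b" using phi_mono assms by simp
  moreover have "phi Q (BB b) \<le> phi Q (BB a)" using phi_mono BB_mono[OF assms(2)] BB_pos[of b] BB_AM assms
    by (cases "b = AM") (auto simp: less_eq_real_def)
  ultimately show ?thesis unfolding FF_def by simp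
qed

lemma FF_0: "FF Q 0 \<le> - l"
  using phi_mono[of 0 "BB 0" Q] BB_pos[OF AM_pos] unfolding FF_def by simp

lemma FF_AM: "AM - l \<le> FF Q AM"
  using phi_mono[of 0 AM Q] AM_pos unfolding FF_def BB_AM by simp

lemma BB_cont: "continuous_on S BB" unfolding BB_def by (intro continuous_intros)

lemma FF_cont: "continuous_on S (FF Q)"
proof -
  have "continuous_on S (\<lambda>a. phi Q (BB a))"
    using continuous_on_compose[OF BB_cont continuous_on_subset[OF phi_cont subset_UNIV]]
    by (simp add: o_def)
  moreover have "continuous_on S (phi Q)" using phi_cont continuous_on_subset by blast
  ultimately show ?thesis unfolding FF_def[abs_def] by (intro continuous_intros)
qed

lemma Sol_ex: assumes "-l < y" "y < AM - l" shows "\<exists>!a. 0 < a \<and> a < AM \<and> FF Q a = y"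
proof -
  obtain a where a: "0 \<le> a" "a \<le> AM" "FF Q a = y"
    using IVT'[of "FF Q" 0 y AM] FF_0[of Q] FF_AM[of Q] assms AM_pos FF_cont by force
  have "a \<noteq> 0" using a FF_0[of Q] assms by auto
  moreover have "a \<noteq> AM" using a FF_AM[of Q] assms by auto
  ultimately have a': "0 < a \<and> a < AM \<and> FF Q a = y" using a by simp
  show ?thesis
  proof (rule ex1I[of _ a])
    show "0 < a \<and> a < AM \<and> FF Q a = y" by fact
    fix b assume b: "0 < b \<and> b < AM \<and> FF Q b = y"
    show "b = a"
    proof (rule ccontr)
      assume "b \<noteq> a"
      hence "a < b \<or> b < a" by auto
      thus False using FF_grow[of a b Q] FF_grow[of b a Q] a' b by auto
    qed
  qed
qed

definition Sol :: "real \<Rightarrow> real \<Rightarrow> real" where "Sol Q y = (THE a. 0 < a \<and> a < AM \<and> FF Q a = y)"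

lemma Sol: assumes "-l < y" "y < AM - l" shows "0 < Sol Q y" "Sol Q y < AM" "FF Q (Sol Q y) = y"
  using theI'[OF Sol_ex[OF assms, of Q]] unfolding Sol_def by auto

lemma FF_diff_bound: assumes "0 \<le> a" "a \<le> AM" "0 \<le> b" "b \<le> AM" shows "\<bar>a - b\<bar> \<le> \<bar>FF Q a - FF Q b\<bar>"
  using FF_grow[of a b Q] FF_grow[of b a Q] assms by (cases "a \<le> b") auto

lemma G2_eq:
  assumes "0 < a" "a < AM"
  shows "G2 l r \<alpha> \<beta> Q a \<delta> = - FF Q a"
proof -
  have B: "Bpnp l r \<alpha> \<beta> a = BB a" unfolding Bpnp_def BB_def kk_def by simp
  have ua: "uu Q a > 0" using uu_pos[of Q a] assms by auto
  have ub: "uu Q (BB a) > 0" using uu_pos[of Q "BB a"] BB_pos[of a] assms by auto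
  have sa: "Sa Q a = SS Q a" unfolding Sa_def SS_def by simp
  have sb: "Sb l r \<alpha> \<beta> Q a = SS Q (BB a)" unfolding Sb_def SS_def B by simp
  have q: "(Sa Q a + \<delta> * Q) / (Sb l r \<alpha> \<beta> Q a + \<delta> * Q) = uu Q a / uu Q (BB a)"
    unfolding sa sb uu_def ..
  have "ln (uu Q a / uu Q (BB a)) = ln (uu Q a) - ln (uu Q (BB a))"
    using ua ub by (simp add: ln_div)
  note L = this
  show ?thesis unfolding G2_def Npnp_def q L unfolding sa sb FF_def phi_def by (simp add: algebra_simps)
qed

lemma AM_eq: "AMpnp l r \<alpha> \<beta> = AM" unfolding AMpnp_def AM_def ..

lemma Asol_eq: "Asol l r \<alpha> \<beta> Q \<delta> = Sol Q 0"
proof -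
  have "\<And>a. (0 < a \<and> a < AMpnp l r \<alpha> \<beta> \<and> G2 l r \<alpha> \<beta> Q a \<delta> = 0) = (0 < a \<and> a < AM \<and> FF Q a = 0)"
    using G2_eq unfolding AM_eq by auto
  thus ?thesis unfolding Asol_def Sol_def by simp
qed

definition FQ :: "real \<Rightarrow> real \<Rightarrow> real" where "FQ Q a = psi Q a - psi Q (BB a)"
definition FA :: "real \<Rightarrow> real \<Rightarrow> real" where "FA Q a = 1 + a / uu Q a + kk * (BB a / uu Q (BB a))"

lemma FA_pos: assumes "0 < a" "a < AM" shows "FA Q a > 0"
proof -
  have "uu Q a > 0" using uu_pos[of Q a] assms by auto
  moreover have "uu Q (BB a) > 0" "BB a > 0" using uu_pos[of Q "BB a"] BB_pos[of a] assms by auto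
  ultimately show ?thesis unfolding FA_def using assms kk_pos by (simp add: add_pos_nonneg)
qed

lemma FF_fderiv:
  assumes a: "0 < a" "a < AM"
  shows "((\<lambda>p. FF (fst p) (snd p)) has_derivative (\<lambda>h. FQ Q a * fst h + FA Q a * snd h)) (at (Q, a))"
proof -
  have Bp: "BB a > 0" using BB_pos a by simp
  have b1: "((\<lambda>p. BB (snd p)) has_derivative (\<lambda>h. - kk * snd h)) (at (Q, a))"
    unfolding BB_def by (rule has_derivative_eq_rhs, (rule derivative_intros)+) (auto simp: algebra_simps)
  have M: "((\<lambda>p. (fst p, BB (snd p))) has_derivative (\<lambda>h. (fst h, - kk * snd h))) (at (Q, a))"
    by (rule has_derivative_Pair[OF has_derivative_fst[OF has_derivative_ident] b1])
  have P: "((\<lambda>p. phi (fst p) (snd p)) has_derivative (\<lambda>h. psi Q (BB a) * fst h + BB a / uu Q (BB a) * snd h))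
      (at ((\<lambda>p. (fst p, BB (snd p))) (Q, a)))"
    using phi_fderiv[OF Bp, of Q] by simp
  have C: "((\<lambda>p. phi (fst p) (BB (snd p))) has_derivative (\<lambda>h. psi Q (BB a) * fst h + BB a / uu Q (BB a) * (- kk * snd h))) (at (Q, a))"
    using has_derivative_compose[OF M P] by simp
  have A1: "((\<lambda>p. phi (fst p) (snd p)) has_derivative (\<lambda>h. psi Q a * fst h + a / uu Q a * snd h)) (at (Q, a))"
    using phi_fderiv[OF a(1)] .
  have S1: "((\<lambda>p. snd p - l) has_derivative (\<lambda>h. snd h)) (at (Q, a))"
    by (rule has_derivative_eq_rhs, (rule derivative_intros)+) auto
  have D: "((\<lambda>p. snd p - l + phi (fst p) (snd p) - phi (fst p) (BB (snd p))) has_derivative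
     (\<lambda>h. snd h + (psi Q a * fst h + a / uu Q a * snd h) - (psi Q (BB a) * fst h + BB a / uu Q (BB a) * (- kk * snd h)))) (at (Q, a))"
    by (rule has_derivative_diff[OF has_derivative_add[OF S1 A1] C])
  have E: "(\<lambda>h. snd h + (psi Q a * fst h + a / uu Q a * snd h) - (psi Q (BB a) * fst h + BB a / uu Q (BB a) * (- kk * snd h)))
     = (\<lambda>h. FQ Q a * fst h + FA Q a * snd h)"
    by (rule ext) (simp add: FQ_def FA_def algebra_simps)
  have F: "(\<lambda>p. FF (fst p) (snd p)) = (\<lambda>p. snd p - l + phi (fst p) (snd p) - phi (fst p) (BB (snd p)))"
    by (simp add: FF_def[abs_def])
  show ?thesis unfolding F using D unfolding E .
qed

lemma Sol_deriv:
  shows "((\<lambda>q. Sol q 0) has_real_derivative (- FQ Q (Sol Q 0) / FA Q (Sol Q 0))) (at Q)"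
proof -
  define A0 where "A0 = Sol Q 0"
  have y0: "-l < (0::real)" "(0::real) < AM - l" using l l_AM by auto
  have A0: "0 < A0" "A0 < AM" "FF Q A0 = 0" using Sol[OF y0] unfolding A0_def by auto
  define a1 where "a1 = FQ Q A0"
  define a2 where "a2 = FA Q A0"
  have a2: "a2 > 0" unfolding a2_def using FA_pos A0 by simp
  define Phi :: "real \<times> real \<Rightarrow> real \<times> real" where "Phi = (\<lambda>p. (fst p, FF (fst p) (snd p)))"
  define g :: "real \<times> real \<Rightarrow> real \<times> real" where "g = (\<lambda>z. (fst z, Sol (fst z) (snd z)))"
  define g' :: "real \<times> real \<Rightarrow> real \<times> real" where "g' = (\<lambda>h. (fst h, (snd h - a1 * fst h) / a2))"
  define T :: "(real \<times> real) set" where "T = {z. -l < snd z} \<inter> {z. snd z < AM - l}"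
  have openT: "open T" unfolding T_def
    by (intro open_Int open_Collect_less continuous_intros)
  have inT: "(Q, 0) \<in> T" unfolding T_def using y0 by simp
  have gy: "g (Q, 0) = (Q, A0)" unfolding g_def A0_def by simp
  have derPhi: "(Phi has_derivative (\<lambda>h. (fst h, a1 * fst h + a2 * snd h))) (at (g (Q, 0)))"
    unfolding gy Phi_def a1_def a2_def
    by (rule has_derivative_Pair[OF has_derivative_fst[OF has_derivative_ident] FF_fderiv[OF A0(1,2)]])
  have lin: "bounded_linear g'"
  proof -
    have "linear g'" unfolding g'_def
      by (rule linearI) (auto simp: algebra_simps diff_divide_distrib add_divide_distrib)
    thus ?thesis by (simp add: linear_conv_bounded_linear)
  qed
  have comp: "g' \<circ> (\<lambda>h. (fst h, a1 * fst h + a2 * snd h)) = id"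
    unfolding g'_def using a2 by (auto simp: fun_eq_iff)
  have inv: "Phi (g z) = z" if "z \<in> T" for z
  proof -
    have "-l < snd z" "snd z < AM - l" using that unfolding T_def by auto
    thus ?thesis unfolding Phi_def g_def using Sol by (simp add: prod_eq_iff)
  qed
  have FFc: "isCont (\<lambda>q. FF q A0) Q"
    by (rule DERIV_isCont[OF chain2q[OF FF_fderiv[OF A0(1,2)]]])
  have contg: "continuous (at (Q, 0)) g"
  proof -
    have t1: "((\<lambda>z. fst z) \<longlongrightarrow> Q) (at (Q, 0::real))"
      using tendsto_fst[OF tendsto_ident_at[of "(Q, 0::real)" UNIV]] by simp
    have t2: "((\<lambda>z. \<bar>snd z\<bar> + \<bar>FF (fst z) A0\<bar>) \<longlongrightarrow> 0) (at (Q, 0::real))"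
    proof -
      have "((\<lambda>z. snd z) \<longlongrightarrow> 0) (at (Q, 0::real))"
        using tendsto_snd[OF tendsto_ident_at[of "(Q, 0::real)" UNIV]] by simp
      moreover have "((\<lambda>z. FF (fst z) A0) \<longlongrightarrow> FF Q A0) (at (Q, 0::real))"
        by (rule isCont_tendsto_compose[OF FFc t1])
      ultimately have "((\<lambda>z. \<bar>snd z\<bar> + \<bar>FF (fst z) A0\<bar>) \<longlongrightarrow> \<bar>0\<bar> + \<bar>FF Q A0\<bar>) (at (Q, 0::real))"
        by (intro tendsto_intros)
      thus ?thesis using A0 by simp
    qed
    have ev: "eventually (\<lambda>z. norm (Sol (fst z) (snd z) - A0) \<le> \<bar>snd z\<bar> + \<bar>FF (fst z) A0\<bar>) (at (Q, 0::real))"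
      unfolding eventually_at_topological
    proof (intro exI conjI ballI impI)
      show "open T" "(Q, 0) \<in> T" by (fact openT, fact inT)
      fix z assume "z \<in> T"
      hence z: "-l < snd z" "snd z < AM - l" unfolding T_def by auto
      note s = Sol[OF z, of "fst z"]
      have "\<bar>Sol (fst z) (snd z) - A0\<bar> \<le> \<bar>FF (fst z) (Sol (fst z) (snd z)) - FF (fst z) A0\<bar>"
        using FF_diff_bound[of "Sol (fst z) (snd z)" A0 "fst z"] s A0 by simp
      also have "\<dots> = \<bar>snd z - FF (fst z) A0\<bar>" using s by simp
      also have "\<dots> \<le> \<bar>snd z\<bar> + \<bar>FF (fst z) A0\<bar>" by simp
      finally show "norm (Sol (fst z) (snd z) - A0) \<le> \<bar>snd z\<bar> + \<bar>FF (fst z) A0\<bar>" by simp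
    qed
    have "((\<lambda>z. Sol (fst z) (snd z) - A0) \<longlongrightarrow> 0) (at (Q, 0::real))"
      by (rule Lim_null_comparison[OF ev t2])
    hence t3: "((\<lambda>z. Sol (fst z) (snd z)) \<longlongrightarrow> A0) (at (Q, 0::real))"
      by (rule LIM_zero_cancel)
    have "(g \<longlongrightarrow> (Q, A0)) (at (Q, 0::real))"
      unfolding g_def by (rule tendsto_Pair[OF t1 t3])
    thus ?thesis unfolding continuous_at gy .
  qed
  have dg: "(g has_derivative g') (at (Q, 0))"
    by (rule has_derivative_inverse_basic[OF derPhi lin comp contg openT inT inv])
  have pq: "((\<lambda>q. (q, 0::real)) has_derivative (\<lambda>h. (h, 0))) (at Q)"
    by (rule has_derivative_Pair[OF has_derivative_ident has_derivative_const])
  have dg2: "((\<lambda>q. g (q, 0)) has_derivative (\<lambda>h. g' (h, 0))) (at Q)"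
    using has_derivative_compose[OF pq, of g g'] dg by simp
  have dg3: "((\<lambda>q. snd (g (q, 0))) has_derivative (\<lambda>h. snd (g' (h, 0)))) (at Q)"
    by (rule has_derivative_snd[OF dg2])
  have E1: "(\<lambda>q. snd (g (q, 0))) = (\<lambda>q. Sol q 0)" unfolding g_def by simp
  have E2: "(\<lambda>h. snd (g' (h, 0))) = (*) (- a1 / a2)" unfolding g'_def by (auto simp: fun_eq_iff)
  show ?thesis using dg3 unfolding E1 E2 has_field_derivative_def a1_def a2_def A0_def .
qed

definition As :: "real \<Rightarrow> real" where "As q = Sol q 0"
definition DA :: "real \<Rightarrow> real" where "DA q = - FQ q (As q) / FA q (As q)"

lemma As: "0 < As Q" "As Q < AM" "FF Q (As Q) = 0"
  using Sol[of 0 Q] l l_AM unfolding As_def by auto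

lemma As_deriv: "(As has_real_derivative DA Q) (at Q)"
  using Sol_deriv[of Q] unfolding DA_def As_def[abs_def] by simp

lemma BAs_pos: "BB (As Q) > 0" using BB_pos As by simp

lemma As_order:
  shows "l > r \<Longrightarrow> BB (As Q) < As Q"
    and "l < r \<Longrightarrow> As Q < BB (As Q)"
    and "l = r \<Longrightarrow> As Q = l"
proof -
  let ?A = "As Q"
  have FFl: "FF Q l = phi Q l - phi Q r" unfolding FF_def BB_l by simp
  have A: "0 < ?A" "?A < AM" "FF Q ?A = 0" using As by auto
  have e: "phi Q ?A - phi Q (BB ?A) = l - ?A" using A(3) unfolding FF_def by simp
  show "l > r \<Longrightarrow> BB ?A < ?A"
  proof -
    assume lr: "l > r"
    have "FF Q l > 0" unfolding FFl using phi_strict[of r l Q] lr r by simp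
    have "?A < l"
    proof (rule ccontr)
      assume "\<not> ?A < l"
      hence "?A - l \<le> FF Q ?A - FF Q l" using FF_grow[of l ?A Q] l A by simp
      thus False using \<open>FF Q l > 0\<close> A \<open>\<not> ?A < l\<close> by simp
    qed
    show "BB ?A < ?A"
    proof (rule ccontr)
      assume "\<not> BB ?A < ?A"
      hence "phi Q ?A \<le> phi Q (BB ?A)" using phi_mono[of ?A "BB ?A" Q] A by simp
      thus False using e \<open>?A < l\<close> by simp
    qed
  qed
  show "l < r \<Longrightarrow> ?A < BB ?A"
  proof -
    assume lr: "l < r"
    have "FF Q l < 0" unfolding FFl using phi_strict[of l r Q] lr l by simp
    have "l < ?A"
    proof (rule ccontr)
      assume "\<not> l < ?A"
      hence "l - ?A \<le> FF Q l - FF Q ?A" using FF_grow[of ?A l Q] l_AM A by simp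
      thus False using \<open>FF Q l < 0\<close> A \<open>\<not> l < ?A\<close> by simp
    qed
    show "?A < BB ?A"
    proof (rule ccontr)
      assume "\<not> ?A < BB ?A"
      hence "phi Q (BB ?A) \<le> phi Q ?A" using phi_mono[of "BB ?A" ?A Q] BAs_pos[of Q] by simp
      thus False using e \<open>l < ?A\<close> by simp
    qed
  qed
  show "l = r \<Longrightarrow> ?A = l"
  proof -
    assume lr: "l = r"
    have "FF Q l = 0" using FFl lr by simp
    hence "\<bar>?A - l\<bar> \<le> 0" using FF_diff_bound[of ?A l Q] A l l_AM by simp
    thus ?thesis by simp
  qed
qed

lemma SS_strict: "0 \<le> x \<Longrightarrow> x < y \<Longrightarrow> SS Q x < SS Q y"
  unfolding SS_def by (simp add: power_strict_mono)

lemma psi_cont_on: "0 < x1 \<Longrightarrow> continuous_on {x1..x2} (psi Q)"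
  by (rule continuous_at_imp_continuous_on) (auto intro!: DERIV_isCont[OF psi_deriv_x])

lemma psiX_sign:
  assumes "x > 0"
  shows "Q + \<delta> * SS Q x < 0 \<Longrightarrow> psiX Q x > 0" and "Q + \<delta> * SS Q x > 0 \<Longrightarrow> psiX Q x < 0"
proof -
  have S: "SS Q x > 0" using SS_pos assms by auto
  have u: "uu Q x > 0" using uu_pos assms by auto
  have den: "SS Q x * (uu Q x)\<^sup>2 > 0" using S u by simp
  show "Q + \<delta> * SS Q x < 0 \<Longrightarrow> psiX Q x > 0"
  proof -
    assume "Q + \<delta> * SS Q x < 0"
    hence "(Q + \<delta> * SS Q x) * x < 0" using assms by (simp add: mult_neg_pos)
    thus ?thesis unfolding psiX_def using den by (simp add: divide_neg_pos)
  qed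
  show "Q + \<delta> * SS Q x > 0 \<Longrightarrow> psiX Q x < 0"
  proof -
    assume "Q + \<delta> * SS Q x > 0"
    hence "(Q + \<delta> * SS Q x) * x > 0" using assms by simp
    thus ?thesis unfolding psiX_def using den by simp
  qed
qed

lemma psi_inc:
  assumes "0 < x1" "x1 < x2" "\<And>x. x1 < x \<Longrightarrow> x < x2 \<Longrightarrow> Q + \<delta> * SS Q x < 0"
  shows "psi Q x1 < psi Q x2"
proof (rule DERIV_pos_imp_increasing_open[OF assms(2)])
  fix x assume "x1 < x" "x < x2"
  thus "\<exists>y. (psi Q has_real_derivative y) (at x) \<and> 0 < y"
    using psi_deriv_x[of x Q] psiX_sign(1)[of x Q] assms by force
qed (rule psi_cont_on[OF assms(1)])

lemma psi_dec:
  assumes "0 < x1" "x1 < x2" "\<And>x. x1 < x \<Longrightarrow> x < x2 \<Longrightarrow> Q + \<delta> * SS Q x > 0"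
  shows "psi Q x2 < psi Q x1"
proof -
  have "(\<lambda>x. - psi Q x) x1 < (\<lambda>x. - psi Q x) x2"
  proof (rule DERIV_pos_imp_increasing_open[OF assms(2)])
    fix x assume "x1 < x" "x < x2"
    thus "\<exists>y. ((\<lambda>x. - psi Q x) has_real_derivative y) (at x) \<and> 0 < y"
      using DERIV_minus[OF psi_deriv_x[of x Q]] psiX_sign(2)[of x Q] assms by force
  next
    show "continuous_on {x1..x2} (\<lambda>x. - psi Q x)"
      using psi_cont_on[OF assms(1)] by (intro continuous_intros)
  qed
  thus ?thesis by simp
qed

lemma euler:
  assumes "x > 0" "Q \<noteq> 0"
  shows "psiQ Q x = (- \<delta> + x\<^sup>2 * (Q + \<delta> * SS Q x) / (SS Q x * (uu Q x)\<^sup>2)) / Q"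
proof -
  define S where "S = SS Q x"
  define u where "u = uu Q x"
  have S: "S > 0" using SS_pos assms unfolding S_def by auto
  have u: "u > 0" using uu_pos assms unfolding u_def by auto
  have ue: "u = S + \<delta> * Q" unfolding u_def S_def uu_def ..
  have Se: "x\<^sup>2 = S\<^sup>2 - Q\<^sup>2" unfolding S_def SS_sq by simp
  have poly: "Q * (1 - \<delta>\<^sup>2) * S * u - Q * (Q + \<delta> * S)\<^sup>2 = - \<delta> * S * u\<^sup>2 + x\<^sup>2 * (Q + \<delta> * S)"
    unfolding Se ue by (simp add: algebra_simps power2_eq_square power3_eq_cube)
  have "Q * psiQ Q x = Q * ((1 - \<delta>\<^sup>2) / u - (Q + \<delta> * S)\<^sup>2 / (S * u\<^sup>2))"
    unfolding psiQ_def S_def u_def ..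
  also have "\<dots> = (Q * (1 - \<delta>\<^sup>2) * S * u - Q * (Q + \<delta> * S)\<^sup>2) / (S * u\<^sup>2)"
    using S u by (simp add: field_simps power2_eq_square)
  also have "\<dots> = (- \<delta> * S * u\<^sup>2 + x\<^sup>2 * (Q + \<delta> * S)) / (S * u\<^sup>2)" unfolding poly ..
  also have "\<dots> = - \<delta> + x\<^sup>2 * (Q + \<delta> * S) / (S * u\<^sup>2)"
    using S u by (simp add: field_simps power2_eq_square)
  finally show ?thesis using assms(2) unfolding S_def u_def by (simp add: field_simps)
qed

lemma BAs_deriv: "((\<lambda>q. BB (As q)) has_real_derivative (- kk * DA Q)) (at Q)"
proof -
  have "((\<lambda>q. kk * (l - As q) + r) has_real_derivative (kk * (0 - DA Q) + 0)) (at Q)"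
    by (intro DERIV_add DERIV_cmult DERIV_diff DERIV_const As_deriv)
  thus ?thesis unfolding BB_def by simp
qed

lemma W_deriv: "((\<lambda>q. FQ q (As q)) has_real_derivative
   ((psiQ Q (As Q) + psiX Q (As Q) * DA Q) - (psiQ Q (BB (As Q)) + psiX Q (BB (As Q)) * (- kk * DA Q)))) (at Q)"
proof -
  have d1: "((\<lambda>q. psi q (As q)) has_real_derivative (psiQ Q (As Q) + psiX Q (As Q) * DA Q)) (at Q)"
    by (rule chain2[OF psi_fderiv[OF As(1)] As_deriv])
  have d2: "((\<lambda>q. psi q (BB (As q))) has_real_derivative (psiQ Q (BB (As Q)) + psiX Q (BB (As Q)) * (- kk * DA Q))) (at Q)"
    by (rule chain2[where g="\<lambda>q. BB (As q)", OF psi_fderiv[OF BAs_pos] BAs_deriv])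
  show ?thesis unfolding FQ_def by (rule DERIV_diff[OF d1 d2])
qed

lemma DA_zero: "FQ Q (As Q) = 0 \<Longrightarrow> DA Q = 0" unfolding DA_def by simp

lemma DA_sgn: "sgn (DA Q) = - sgn (FQ Q (As Q))"
proof -
  have "FA Q (As Q) > 0" using FA_pos As by simp
  thus ?thesis unfolding DA_def by (simp add: sgn_divide)
qed

context
  assumes dpos: "\<delta> > 0"
begin

lemma crit:
  assumes x1: "0 < x1" "x1 < x2" and eq: "psi Q x1 = psi Q x2" and Q: "Q < 0"
  shows "psiQ Q x2 < psiQ Q x1"
proof -
  let ?K = "\<lambda>x. Q + \<delta> * SS Q x"
  have K2: "?K x2 > 0"
  proof (rule ccontr)
    assume "\<not> ?K x2 > 0"
    hence "\<And>x. x1 < x \<Longrightarrow> x < x2 \<Longrightarrow> ?K x < 0"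
      using SS_strict[of _ x2 Q] dpos x1 by (smt (verit) mult_strict_left_mono)
    hence "psi Q x1 < psi Q x2" using psi_inc x1 by blast
    thus False using eq by simp
  qed
  have K1: "?K x1 < 0"
  proof (rule ccontr)
    assume "\<not> ?K x1 < 0"
    hence "\<And>x. x1 < x \<Longrightarrow> x < x2 \<Longrightarrow> ?K x > 0"
      using SS_strict[of x1 _ Q] dpos x1 by (smt (verit) mult_strict_left_mono)
    hence "psi Q x2 < psi Q x1" using psi_dec x1 by blast
    thus False using eq by simp
  qed
  have p1: "x1\<^sup>2 * ?K x1 / (SS Q x1 * (uu Q x1)\<^sup>2) < 0"
    using K1 x1 SS_pos[of Q x1] uu_pos[of Q x1] by (simp add: divide_neg_pos mult_pos_neg)
  have p2: "x2\<^sup>2 * ?K x2 / (SS Q x2 * (uu Q x2)\<^sup>2) > 0"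
    using K2 x1 SS_pos[of Q x2] uu_pos[of Q x2] by simp
  have "(- \<delta> + x1\<^sup>2 * ?K x1 / (SS Q x1 * (uu Q x1)\<^sup>2)) / Q > (- \<delta> + x2\<^sup>2 * ?K x2 / (SS Q x2 * (uu Q x2)\<^sup>2)) / Q"
    using p1 p2 Q by (intro divide_strict_right_mono_neg) auto
  thus ?thesis using euler[of x1 Q] euler[of x2 Q] x1 Q by simp
qed

lemma pos_region: assumes "0 \<le> Q" "0 < x1" "x1 < x2" shows "psi Q x2 < psi Q x1"
proof (rule psi_dec[OF assms(2,3)])
  fix x assume "x1 < x" "x < x2"
  hence "SS Q x > 0" using SS_pos assms by auto
  thus "Q + \<delta> * SS Q x > 0" using assms dpos by (simp add: add_nonneg_pos)
qed

definition MM :: real where "MM = AM + kk * l + r"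
definition Q1 :: real where "Q1 = - (MM / (1 - \<delta>))"

lemma Q1_neg: "Q1 < 0"
proof -
  have "MM > 0" unfolding MM_def using AM_pos kk_pos l r by (simp add: add_pos_pos)
  thus ?thesis unfolding Q1_def using dl by simp
qed

lemma neg_region: assumes "0 < x1" "x1 < x2" "x2 < MM" shows "psi Q1 x1 < psi Q1 x2"
proof (rule psi_inc[OF assms(1,2)])
  fix x assume x: "x1 < x" "x < x2"
  define m where "m = MM / (1 - \<delta>)"
  have d1: "\<delta> < 1" using dl by simp
  have MMp: "MM > 0" unfolding MM_def using AM_pos kk_pos l r by (simp add: add_pos_pos)
  have m: "m > 0" unfolding m_def using MMp d1 by simp
  have Q1m: "Q1 = - m" unfolding Q1_def m_def ..
  have xM: "x < m * (1 - \<delta>)" unfolding m_def using x assms d1 by simp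
  have x0: "x > 0" using x assms by simp
  have "x\<^sup>2 < (m * (1 - \<delta>))\<^sup>2" using xM x0 by (simp add: power_strict_mono)
  moreover have "\<delta>\<^sup>2 * x\<^sup>2 \<le> x\<^sup>2" using dpos d1 by (simp add: mult_left_le_one_le power_le_one)
  moreover have "(m * (1 - \<delta>))\<^sup>2 + \<delta>\<^sup>2 * m\<^sup>2 \<le> m\<^sup>2"
  proof -
    have "(1 - \<delta>)\<^sup>2 + \<delta>\<^sup>2 \<le> 1" using dpos d1 by (simp add: power2_eq_square algebra_simps)
    hence "m\<^sup>2 * ((1 - \<delta>)\<^sup>2 + \<delta>\<^sup>2) \<le> m\<^sup>2 * 1" by (intro mult_left_mono) auto
    moreover have "(m * (1 - \<delta>))\<^sup>2 = m\<^sup>2 * (1 - \<delta>)\<^sup>2" by (simp add: power_mult_distrib)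
    ultimately show ?thesis by (simp add: algebra_simps)
  qed
  ultimately have "\<delta>\<^sup>2 * (m\<^sup>2 + x\<^sup>2) < m\<^sup>2" by (simp add: algebra_simps)
  hence "(\<delta> * SS Q1 x)\<^sup>2 < m\<^sup>2" unfolding Q1m SS_def using dpos by (simp add: power_mult_distrib)
  hence "\<delta> * SS Q1 x < m" using m by (simp add: power_less_imp_less_base)
  thus "Q1 + \<delta> * SS Q1 x < 0" unfolding Q1m by simp
qed

lemma part_a:
  "\<exists>Qm<0. \<forall>Q0. (Q0 > Qm \<longrightarrow> sgn (DA Q0) = sgn (l - r)) \<and> (Q0 < Qm \<longrightarrow> sgn (DA Q0) = - sgn (l - r))"
proof (cases "l = r")
  case True
  have "FQ Q (As Q) = 0" for Q
    using As_order(3)[OF True, of Q] True BB_l unfolding FQ_def by simp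
  hence "DA Q = 0" for Q using DA_zero by simp
  thus ?thesis using True by (intro exI[of _ "-1"]) auto
next
  case False
  define sg where "sg = sgn (l - r)"
  have sg: "sg = 1 \<or> sg = -1" unfolding sg_def using False by (auto simp: sgn_real_def)
  define V where "V = (\<lambda>q. sg * FQ q (As q))"
  have Vd: "(V has_real_derivative sg * ((psiQ Q (As Q) + psiX Q (As Q) * DA Q) - (psiQ Q (BB (As Q)) + psiX Q (BB (As Q)) * (- kk * DA Q)))) (at Q)" for Q
    unfolding V_def by (rule DERIV_cmult[OF W_deriv])
  have cont: "continuous_on UNIV V"
    by (rule continuous_at_imp_continuous_on) (use Vd DERIV_isCont in blast)
  have der: "\<exists>D<0. (V has_real_derivative D) (at x)" if x: "x < 0" "V x = 0" for x
  proof -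
    have W0: "FQ x (As x) = 0" using x(2) sg unfolding V_def by auto
    hence D0: "DA x = 0" by (rule DA_zero)
    have pe: "psi x (As x) = psi x (BB (As x))" using W0 unfolding FQ_def by simp
    have "sg * (psiQ x (As x) - psiQ x (BB (As x))) < 0"
    proof (cases "l > r")
      case True
      hence "sg = 1" unfolding sg_def by simp
      moreover have "psiQ x (As x) < psiQ x (BB (As x))"
        using crit[OF BAs_pos As_order(1)[OF True] pe[symmetric] x(1)] .
      ultimately show ?thesis by simp
    next
      case lr: False
      hence lr: "l < r" using False by simp
      hence "sg = -1" unfolding sg_def by simp
      moreover have "psiQ x (BB (As x)) < psiQ x (As x)"
        using crit[OF As(1) As_order(2)[OF lr] pe x(1)] .
      ultimately show ?thesis by simp
    qed
    thus ?thesis using Vd[of x] unfolding D0 by (intro exI[of _ "sg * (psiQ x (As x) - psiQ x (BB (As x)))"]) simp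
  qed
  have neg0: "V x < 0" if "x \<ge> 0" for x
  proof (cases "l > r")
    case True
    have "psi x (As x) < psi x (BB (As x))" by (rule pos_region[OF that BAs_pos As_order(1)[OF True]])
    thus ?thesis using True unfolding V_def sg_def FQ_def by simp
  next
    case lr: False
    hence lr: "l < r" using False by simp
    have "psi x (BB (As x)) < psi x (As x)" by (rule pos_region[OF that As(1) As_order(2)[OF lr]])
    thus ?thesis using lr unfolding V_def sg_def FQ_def by simp
  qed
  have AM_M: "As Q1 < MM" using As(2)[of Q1] kk_pos l r unfolding MM_def
    by (smt (verit) mult_pos_pos)
  have BM: "BB (As Q1) < MM"
  proof -
    have "kk * (l - As Q1) < kk * l" using As(1)[of Q1] kk_pos by simp
    thus ?thesis unfolding BB_def MM_def using AM_pos by simp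
  qed
  have posQ1: "V Q1 > 0"
  proof (cases "l > r")
    case True
    have "psi Q1 (BB (As Q1)) < psi Q1 (As Q1)" by (rule neg_region[OF BAs_pos As_order(1)[OF True] AM_M])
    thus ?thesis using True unfolding V_def sg_def FQ_def by simp
  next
    case lr: False
    hence lr: "l < r" using False by simp
    have "psi Q1 (As Q1) < psi Q1 (BB (As Q1))" by (rule neg_region[OF As(1) As_order(2)[OF lr] BM])
    thus ?thesis using lr unfolding V_def sg_def FQ_def by simp
  qed
  obtain z where z: "z < 0" "\<And>x. x > z \<Longrightarrow> V x < 0" "\<And>x. x < z \<Longrightarrow> V x > 0"
    using single_cross[OF cont der neg0 Q1_neg posQ1] by blast
  have sgnW: "sgn (FQ x (As x)) = sg * sgn (V x)" for x
    using sg unfolding V_def by (auto simp: sgn_mult)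
  show ?thesis
  proof (intro exI[of _ z] conjI allI impI)
    fix Q0 assume "Q0 > z"
    hence "sgn (V Q0) = -1" using z(2) by simp
    thus "sgn (DA Q0) = sgn (l - r)" unfolding DA_sgn sgnW sg_def[symmetric] using sg by auto
  next
    fix Q0 assume "Q0 < z"
    hence "sgn (V Q0) = 1" using z(3) by simp
    thus "sgn (DA Q0) = - sgn (l - r)" unfolding DA_sgn sgnW sg_def[symmetric] using sg by auto
  qed (rule z(1))
qed

end

end

lemma Asol_sym: "Asol l r \<alpha> \<beta> (- q) (- \<delta>) = Asol l r \<alpha> \<beta> q \<delta>"
  unfolding Asol_def G2_def Npnp_def Sa_def Sb_def by simp

lemma pnp_deriv_As:
  assumes "pnp l r \<alpha> \<beta> \<delta>"
  shows "deriv (\<lambda>q. Asol l r \<alpha> \<beta> q \<delta>) Q0 = pnp.DA l r \<alpha> \<beta> \<delta> Q0"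
    and "((\<lambda>q. Asol l r \<alpha> \<beta> q \<delta>) has_real_derivative pnp.DA l r \<alpha> \<beta> \<delta> Q0) (at Q0)"
proof -
  interpret P: pnp l r \<alpha> \<beta> \<delta> by fact
  have e: "(\<lambda>q. Asol l r \<alpha> \<beta> q \<delta>) = P.As" unfolding P.As_def[abs_def] using P.Asol_eq by simp
  show "((\<lambda>q. Asol l r \<alpha> \<beta> q \<delta>) has_real_derivative P.DA Q0) (at Q0)" unfolding e by (rule P.As_deriv)
  thus "deriv (\<lambda>q. Asol l r \<alpha> \<beta> q \<delta>) Q0 = P.DA Q0" by (rule DERIV_imp_deriv)
qed

theorem theorem3p6:
  fixes l r \<alpha> \<beta> D1 D2 \<delta> :: real
  assumes "l > 0" and "r > 0"
    and "0 < \<alpha>" and "\<alpha> < \<beta>" and "\<beta> < 1"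
    and "D1 > 0" and "D2 > 0"
    and "\<delta> = (D2 - D1) / (D2 + D1)"
  shows "(D1 < D2 \<longrightarrow>
           (\<exists>Qm < 0. \<forall>Q0.
              (Q0 > Qm \<longrightarrow> sgn (deriv (\<lambda>q. Asol l r \<alpha> \<beta> q \<delta>) Q0) = sgn (l - r)) \<and>
              (Q0 < Qm \<longrightarrow> sgn (deriv (\<lambda>q. Asol l r \<alpha> \<beta> q \<delta>) Q0) = - sgn (l - r))))
       \<and> (D1 > D2 \<longrightarrow>
           (\<exists>Qp > 0. \<forall>Q0.
              (Q0 < Qp \<longrightarrow> sgn (deriv (\<lambda>q. Asol l r \<alpha> \<beta> q \<delta>) Q0) = - sgn (l - r)) \<and>
              (Q0 > Qp \<longrightarrow> sgn (deriv (\<lambda>q. Asol l r \<alpha> \<beta> q \<delta>) Q0) = sgn (l - r))))"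
proof -
  have sum: "D2 + D1 > 0" using assms(6,7) by simp
  have dl: "\<bar>\<delta>\<bar> < 1"
  proof -
    have lt: "\<bar>D2 - D1\<bar> < D2 + D1" using assms(6,7) by (simp add: abs_less_iff)
    have "\<bar>\<delta>\<bar> = \<bar>D2 - D1\<bar> / \<bar>D2 + D1\<bar>" unfolding assms(8) by (rule abs_divide)
    also have "\<dots> = \<bar>D2 - D1\<bar> / (D2 + D1)" using sum by simp
    also have "\<dots> < 1" using lt sum by simp
    finally show ?thesis .
  qed
  have P1: "pnp l r \<alpha> \<beta> \<delta>" by (rule pnp.intro) (use assms(1-5) dl in auto)
  have P2: "pnp l r \<alpha> \<beta> (- \<delta>)" by (rule pnp.intro) (use assms(1-5) dl in auto)
  show ?thesis
  proof (intro conjI impI)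
    assume "D1 < D2"
    hence dpos: "\<delta> > 0" unfolding assms(8) using sum by simp
    interpret P: pnp l r \<alpha> \<beta> \<delta> by (rule P1)
    obtain Qm where Qm: "Qm < 0" "\<And>Q0. Q0 > Qm \<Longrightarrow> sgn (P.DA Q0) = sgn (l - r)"
      "\<And>Q0. Q0 < Qm \<Longrightarrow> sgn (P.DA Q0) = - sgn (l - r)"
      using P.part_a[OF dpos] by blast
    show "\<exists>Qm < 0. \<forall>Q0.
              (Q0 > Qm \<longrightarrow> sgn (deriv (\<lambda>q. Asol l r \<alpha> \<beta> q \<delta>) Q0) = sgn (l - r)) \<and>
              (Q0 < Qm \<longrightarrow> sgn (deriv (\<lambda>q. Asol l r \<alpha> \<beta> q \<delta>) Q0) = - sgn (l - r))"
      using Qm pnp_deriv_As(1)[OF P1] by (intro exI[of _ Qm]) auto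
  next
    assume "D2 < D1"
    hence "(D2 - D1) / (D2 + D1) < 0" using sum by (intro divide_neg_pos) auto
    hence dpos: "- \<delta> > 0" unfolding assms(8) by linarith
    interpret P: pnp l r \<alpha> \<beta> "- \<delta>" by (rule P2)
    obtain Qm where Qm: "Qm < 0" "\<And>Q0. Q0 > Qm \<Longrightarrow> sgn (P.DA Q0) = sgn (l - r)"
      "\<And>Q0. Q0 < Qm \<Longrightarrow> sgn (P.DA Q0) = - sgn (l - r)"
      using P.part_a[OF dpos] by blast
    have D: "deriv (\<lambda>q. Asol l r \<alpha> \<beta> q \<delta>) Q0 = - P.DA (- Q0)" for Q0
    proof -
      have e: "(\<lambda>q. Asol l r \<alpha> \<beta> q \<delta>) = (\<lambda>q. Asol l r \<alpha> \<beta> (- q) (- \<delta>))"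
        by (rule ext) (rule Asol_sym[symmetric])
      have c: "((\<lambda>q. - q) has_real_derivative - 1) (at Q0)" using DERIV_minus[OF DERIV_ident] .
      have f: "((\<lambda>q. Asol l r \<alpha> \<beta> q (- \<delta>)) has_real_derivative P.DA (- Q0)) (at (- Q0))"
        by (rule pnp_deriv_As(2)[OF P2])
      have "((\<lambda>q. Asol l r \<alpha> \<beta> (- q) (- \<delta>)) has_real_derivative P.DA (- Q0) * (- 1)) (at Q0)"
        by (rule DERIV_chain2[OF f c])
      hence "deriv (\<lambda>q. Asol l r \<alpha> \<beta> (- q) (- \<delta>)) Q0 = P.DA (- Q0) * (- 1)" by (rule DERIV_imp_deriv)
      thus ?thesis unfolding e by simp
    qed
    show "\<exists>Qp > 0. \<forall>Q0.
              (Q0 < Qp \<longrightarrow> sgn (deriv (\<lambda>q. Asol l r \<alpha> \<beta> q \<delta>) Q0) = - sgn (l - r)) \<and>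
              (Q0 > Qp \<longrightarrow> sgn (deriv (\<lambda>q. Asol l r \<alpha> \<beta> q \<delta>) Q0) = sgn (l - r))"
    proof (intro exI[of _ "- Qm"] conjI allI impI)
      show "- Qm > 0" using Qm by simp
    next
      fix Q0 assume "Q0 < - Qm"
      thus "sgn (deriv (\<lambda>q. Asol l r \<alpha> \<beta> q \<delta>) Q0) = - sgn (l - r)" unfolding D using Qm(2)[of "- Q0"] by simp
    next
      fix Q0 assume "Q0 > - Qm"
      thus "sgn (deriv (\<lambda>q. Asol l r \<alpha> \<beta> q \<delta>) Q0) = sgn (l - r)" unfolding D using Qm(3)[of "- Q0"] by simp
    qed
  qed
qed

end
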